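(* Let $\mathbf{x}_1,\dots,\mathbf{x}_m\in(\mathbb{C}^* )^n$ and $\mathbf{x}_i^{-1}=(1/x_i^1,\dots,1/x_i^n)$. For $1\le i\le m$ and $i\le j\le n$, $\frac{\Delta_{[1,i-1],[j-i+2,j]}(H(\mathbf{x}_1^{-1})\cdots H(\mathbf{x}_m^{-1}))}{\Delta_{[1,i],[j-i+1,j]}(H(\mathbf{x}_1^{-1})\cdots H(\mathbf{x}_m^{-1}))}=\frac{\Delta_{[i,j],[1,j-i+1]}(W(\mathbf{x}_1)\cdots W(\mathbf{x}_m))}{\Delta_{[i+1,j],[1,j-i]}(W(\mathbf{x}_1)\cdots W(\mathbf{x}_m))}.$
   Context: All matrices are $n\times n$. $\Delta_{I,J}(A)$ is the minor of $A$ with rows $I$ and columns $J$; $\Delta_{\emptyset,\emptyset}=1$. For $\mathbf{x}_i=(x_i^1,\dots,x_i^n)$, $W(\mathbf{x}_i)$ has diagonal $x_i^1,\dots,x_i^n$, $1$'s directly below the diagonal and $0$ elsewhere. For $(a^1,\dots,a^n)$, $H(a^1,\dots,a^n)=\sum_{k\le l}a^ka^{k+1}\cdots a^lE_{kl}$ (upper triangular), where $E_{kl}$ is a matrix unit. *)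

theory Defs
  imports "Jordan_Normal_Form.Determinant" "Jordan_Normal_Form.DL_Submatrix"
begin

text \<open>Matrices are n x n JNF matrices (0-indexed internally); the paper's 1-indexed
  row/column k corresponds to internal index k-1. Vectors a = (a^1,...,a^n) are
  functions nat => complex, with a k the k-th coordinate (1 <= k <= n).\<close>

definition W_mat :: "nat \<Rightarrow> (nat \<Rightarrow> complex) \<Rightarrow> complex mat" where
  "W_mat n a = mat n n (\<lambda>(r,c). if r = c then a (r+1) else if r = c + 1 then 1 else 0)"

definition H_mat :: "nat \<Rightarrow> (nat \<Rightarrow> complex) \<Rightarrow> complex mat" where
  "H_mat n a = mat n n (\<lambda>(r,c). if r \<le> c then (\<Prod>t\<in>{r+1..c+1}. a t) else 0)"

text \<open>Minor with 1-indexed row set I and column set J; the empty minor is det of a 0x0 matrix = 1.\<close>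
definition Delta :: "complex mat \<Rightarrow> nat set \<Rightarrow> nat set \<Rightarrow> complex" where
  "Delta A I J = det (submatrix A ((\<lambda>k. k - 1) ` I) ((\<lambda>k. k - 1) ` J))"

text \<open>Products H(x_1^{-1}) ... H(x_m^{-1}) and W(x_1) ... W(x_m), where x i k = x_i^k.\<close>
definition prodH :: "nat \<Rightarrow> nat \<Rightarrow> (nat \<Rightarrow> nat \<Rightarrow> complex) \<Rightarrow> complex mat" where
  "prodH n m x = foldr (\<lambda>i A. H_mat n (\<lambda>k. 1 / x i k) * A) [1..<m+1] (1\<^sub>m n)"

definition prodW :: "nat \<Rightarrow> nat \<Rightarrow> (nat \<Rightarrow> nat \<Rightarrow> complex) \<Rightarrow> complex mat" where
  "prodW n m x = foldr (\<lambda>i A. W_mat n (x i) * A) [1..<m+1] (1\<^sub>m n)"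

end

theory Submission imports Defs begin

lemma pick_interval: assumes "k < p" shows "pick {s..<s+p} k = s + k"
proof -
  have "{a\<in>{s..<s+p}. a < s+k} = {s..<s+k}" using assms by auto
  hence "card {a\<in>{s..<s+p}. a < s+k} = k" by simp
  with pick_card_in_set[of "s+k" "{s..<s+p}"] assms show ?thesis by simp
qed

lemma submatrix_interval:
  assumes "A \<in> carrier_mat n n" "s + p \<le> n" "t + p \<le> n"
  shows "submatrix A {s..<s+p} {t..<t+p} = mat p p (\<lambda>(r,c). A $$ (s+r, t+c))"
proof -
  have c1: "{i. i < dim_row A \<and> i \<in> {s..<s+p}} = {s..<s+p}" using assms by auto
  have c2: "{i. i < dim_col A \<and> i \<in> {t..<t+p}} = {t..<t+p}" using assms by auto
  show ?thesis unfolding submatrix_def c1 c2 by (rule eq_matI) (auto simp: pick_interval)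
qed

lemma img_interval: fixes a b :: nat assumes "1 \<le> a" shows "(\<lambda>k. k - 1) ` {a..b} = {a-1..<b}"
proof -
  have "{a-1..<b} = (\<lambda>k. k - 1) ` {a..b}"
  proof
    show "{a-1..<b} \<subseteq> (\<lambda>k. k - 1) ` {a..b}"
    proof
      fix y assume "y \<in> {a-1..<b}" thus "y \<in> (\<lambda>k. k - 1) ` {a..b}"
        using assms by (intro image_eqI[of _ _ "y+1"]) auto
    qed
  qed (use assms in auto)
  thus ?thesis by simp
qed

lemma Delta_interval:
  assumes "A \<in> carrier_mat n n" "1 \<le> a" "1 \<le> c" "a - 1 + p \<le> n" "c - 1 + p \<le> n"
    "b = a - 1 + p" "d = c - 1 + p"
  shows "Delta A {a..b} {c..d} = det (mat p p (\<lambda>(r,s). A $$ (a-1+r, c-1+s)))"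
proof -
  have "(\<lambda>k. k - 1) ` {a..b} = {a-1..<a-1+p}" using img_interval[OF assms(2)] assms by simp
  moreover have "(\<lambda>k. k - 1) ` {c..d} = {c-1..<c-1+p}" using img_interval[OF assms(3)] assms by simp
  ultimately show ?thesis unfolding Delta_def using submatrix_interval[OF assms(1,4,5)] by simp
qed

lemma mult_entry:
  assumes "A \<in> carrier_mat a b" "B \<in> carrier_mat b c" "r < a" "s < c"
  shows "(A * B) $$ (r,s) = (\<Sum>k<b. A $$ (r,k) * B $$ (k,s))"
  using assms by (simp add: scalar_prod_def lessThan_atLeast0)

lemma det_antiblock:
  "det (mat (p+q) (p+q) (\<lambda>(r,c). if c < q then f r c else if r = c - q then 1 else 0))
   = (-1)^(p*q) * det (mat q q (\<lambda>(r,c). f (p+r) c))"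
proof (induction p arbitrary: f)
  case 0
  have "mat (0+q) (0+q) (\<lambda>(r,c). if c < q then f r c else if r = c - q then 1 else (0::'a))
     = mat q q (\<lambda>(r,c). f (0+r) c)" by (rule eq_matI) auto
  then show ?case by simp
next
  case (Suc p)
  let ?M = "mat (Suc p+q) (Suc p+q) (\<lambda>(r,c). if c < q then f r c else if r = c - q then 1 else (0::'a))"
  have M: "?M \<in> carrier_mat (Suc (p+q)) (Suc (p+q))" by simp
  have "det ?M = (\<Sum>r<Suc (p+q). ?M $$ (r,q) * cofactor ?M r q)"
    by (rule laplace_expansion_column[OF M]) simp
  also have "\<dots> = (\<Sum>r\<in>{0}. ?M $$ (r,q) * cofactor ?M r q)"
    by (rule sum.mono_neutral_right) auto
  also have "\<dots> = cofactor ?M 0 q" by simp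
  also have "\<dots> = (-1)^q * det (mat_delete ?M 0 q)" unfolding cofactor_def by simp
  also have "mat_delete ?M 0 q = mat (p+q) (p+q) (\<lambda>(r,c). if c < q then f (Suc r) c else if r = c - q then 1 else 0)"
    unfolding mat_delete_def by (rule eq_matI) (auto simp: Suc_diff_le not_less)
  also have "det \<dots> = (-1)^(p*q) * det (mat q q (\<lambda>(r,c). f (Suc p+r) c))"
    using Suc.IH[of "\<lambda>r c. f (Suc r) c"] by simp
  finally show ?case by (simp add: power_add)
qed

lemma jacobi:
  fixes A B :: "'a :: idom mat"
  assumes A: "A \<in> carrier_mat (p+q) (p+q)" and B: "B \<in> carrier_mat (p+q) (p+q)"
    and AB: "A * B = 1\<^sub>m (p+q)"
  shows "det (mat q q (\<lambda>(r,c). A $$ (p+r,c))) = (-1)^(p*q) * det A * det (mat p p (\<lambda>(r,c). B $$ (q+r,c)))"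
proof -
  define Y where "Y = four_block_mat (1\<^sub>m q) (mat q p (\<lambda>(r,c). B $$ (r,c))) (0\<^sub>m p q) (mat p p (\<lambda>(r,c). B $$ (q+r,c)))"
  have Yc: "Y \<in> carrier_mat (p+q) (p+q)" unfolding Y_def
    using four_block_carrier_mat[of "1\<^sub>m q" q q "mat p p (\<lambda>(r,c). B $$ (q+r,c))" p p] by (simp add: add.commute)
  have detY: "det Y = det (mat p p (\<lambda>(r,c). B $$ (q+r,c)))" unfolding Y_def
    by (subst det_four_block_mat_lower_left_zero) auto
  have Yent: "Y $$ (k,c) = (if c < q then (if k = c then 1 else 0) else B $$ (k, c-q))" if "k < p+q" "c < p+q" for k c
    using that unfolding Y_def by auto
  have AY: "A * Y = mat (p+q) (p+q) (\<lambda>(r,c). if c < q then A $$ (r,c) else if r = c - q then 1 else 0)"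
  proof (rule eq_matI)
    fix r c assume rc: "r < dim_row (mat (p+q) (p+q) (\<lambda>(r,c). if c < q then A $$ (r,c) else if r = c - q then 1 else (0::'a)))"
      "c < dim_col (mat (p+q) (p+q) (\<lambda>(r,c). if c < q then A $$ (r,c) else if r = c - q then 1 else (0::'a)))"
    hence r: "r < p+q" and c: "c < p+q" by auto
    have "(A * Y) $$ (r,c) = (\<Sum>k<p+q. A $$ (r,k) * Y $$ (k,c))" by (rule mult_entry[OF A Yc r c])
    also have "\<dots> = (if c < q then A $$ (r,c) else if r = c - q then 1 else 0)"
    proof (cases "c < q")
      case True
      have "(\<Sum>k<p+q. A $$ (r,k) * Y $$ (k,c)) = (\<Sum>k<p+q. if k = c then A $$ (r,k) else 0)"
        by (rule sum.cong) (auto simp: Yent c True)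
      also have "\<dots> = A $$ (r,c)" using c by simp
      finally show ?thesis using True by simp
    next
      case False
      have "(\<Sum>k<p+q. A $$ (r,k) * Y $$ (k,c)) = (\<Sum>k<p+q. A $$ (r,k) * B $$ (k,c-q))"
        by (rule sum.cong) (auto simp: Yent c False)
      also have "\<dots> = (A * B) $$ (r, c-q)" using mult_entry[OF A B r, of "c-q"] c by simp
      also have "\<dots> = (if r = c - q then 1 else 0)" unfolding AB using r c by simp
      finally show ?thesis using False by simp
    qed
    finally show "(A * Y) $$ (r,c) = mat (p+q) (p+q) (\<lambda>(r,c). if c < q then A $$ (r,c) else if r = c - q then 1 else 0) $$ (r,c)"
      using r c by simp
  qed (use A Yc in auto)
  have "det (A * Y) = det A * det Y" by (rule det_mult[OF A Yc])
  also have "det (A * Y) = (-1)^(p*q) * det (mat q q (\<lambda>(r,c). A $$ (p+r,c)))"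
    unfolding AY by (rule det_antiblock)
  finally have e: "det A * det (mat p p (\<lambda>(r,c). B $$ (q+r,c))) = (-1)^(p*q) * det (mat q q (\<lambda>(r,c). A $$ (p+r,c)))"
    unfolding detY by simp
  have sq: "((-1::'a)^k) * ((-1)^k) = 1" for k by (induction k) auto
  have "(-1)^(p*q) * (det A * det (mat p p (\<lambda>(r,c). B $$ (q+r,c)))) = ((-1)^(p*q) * (-1)^(p*q)) * det (mat q q (\<lambda>(r,c). A $$ (p+r,c)))"
    unfolding e by (simp only: mult.assoc)
  thus ?thesis unfolding sq by (simp add: mult.assoc)
qed

definition ST :: "nat \<Rightarrow> complex mat \<Rightarrow> complex mat" where
  "ST n X = mat n n (\<lambda>(a,b). (-1)^(a+b) * X $$ (b,a))"

lemma ST_carrier[simp]: "ST n X \<in> carrier_mat n n" unfolding ST_def by simp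

lemma ST_index: "a < n \<Longrightarrow> b < n \<Longrightarrow> ST n X $$ (a,b) = (-1)^(a+b) * X $$ (b,a)"
  unfolding ST_def by simp

lemma ST_mult:
  assumes X: "X \<in> carrier_mat n n" and Y: "Y \<in> carrier_mat n n"
  shows "ST n (X * Y) = ST n Y * ST n X"
proof (rule eq_matI)
  fix a b assume "a < dim_row (ST n Y * ST n X)" "b < dim_col (ST n Y * ST n X)"
  hence a: "a < n" and b: "b < n" by (simp_all add: ST_def)
  have "(ST n Y * ST n X) $$ (a,b) = (\<Sum>k<n. ST n Y $$ (a,k) * ST n X $$ (k,b))"
    by (rule mult_entry[OF ST_carrier ST_carrier a b])
  also have "\<dots> = (\<Sum>k<n. (-1)^(a+b) * (X $$ (b,k) * Y $$ (k,a)))"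
  proof (rule sum.cong[OF refl])
    fix k assume "k \<in> {..<n}"
    hence k: "k < n" by simp
    have "((-1::complex)^(a+k)) * (-1)^(k+b) = (-1)^(a+b) * ((-1)^k * (-1)^k)"
      by (simp add: power_add)
    also have "(-1::complex)^k * (-1)^k = 1" by (induction k) auto
    finally have e: "((-1::complex)^(a+k)) * (-1)^(k+b) = (-1)^(a+b)" by simp
    show "ST n Y $$ (a,k) * ST n X $$ (k,b) = (-1)^(a+b) * (X $$ (b,k) * Y $$ (k,a))"
      using e by (simp add: ST_index a b k algebra_simps)
  qed
  also have "\<dots> = (-1)^(a+b) * (X * Y) $$ (b,a)"
    by (simp add: sum_distrib_left mult_entry[OF X Y b a])
  also have "\<dots> = ST n (X * Y) $$ (a,b)" using a b X by (simp add: ST_index)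
  finally show "ST n (X * Y) $$ (a,b) = (ST n Y * ST n X) $$ (a,b)" by simp
qed (use X Y in \<open>auto simp: ST_def\<close>)

lemma ST_one: "ST n (1\<^sub>m n) = 1\<^sub>m n"
  by (rule eq_matI) (auto simp: ST_def)

lemma W_carrier[simp]: "W_mat n a \<in> carrier_mat n n" unfolding W_mat_def by simp
lemma H_carrier[simp]: "H_mat n a \<in> carrier_mat n n" unfolding H_mat_def by simp

lemma W_sum:
  assumes r: "r < n"
  shows "(\<Sum>k<n. W_mat n a $$ (r,k) * g k) = a (r+1) * g r + (if 0 < r then g (r-1) else 0)"
proof -
  have "(\<Sum>k<n. W_mat n a $$ (r,k) * g k) = (\<Sum>k<n. (if k = r then a (r+1) * g r else 0) + (if k = r - 1 \<and> 0 < r then g (r-1) else 0))"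
    by (rule sum.cong) (auto simp: W_mat_def r)
  also have "\<dots> = a (r+1) * g r + (if 0 < r then g (r-1) else 0)"
    using r by (simp add: sum.distrib)
  finally show ?thesis .
qed

lemma WH_inv:
  assumes nz: "\<And>k. 1 \<le> k \<Longrightarrow> k \<le> n \<Longrightarrow> a k \<noteq> 0"
  shows "W_mat n a * ST n (H_mat n (\<lambda>k. 1 / a k)) = 1\<^sub>m n"
proof (rule eq_matI)
  fix r c assume "r < dim_row (1\<^sub>m n :: complex mat)" "c < dim_col (1\<^sub>m n :: complex mat)"
  hence r: "r < n" and c: "c < n" by auto
  let ?H = "H_mat n (\<lambda>k. 1 / a k)"
  have Hi: "?H $$ (u,v) = (if u \<le> v then (\<Prod>t\<in>{u+1..v+1}. 1 / a t) else 0)" if "u < n" "v < n" for u v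
    using that unfolding H_mat_def by simp
  have "(W_mat n a * ST n ?H) $$ (r,c) = (\<Sum>k<n. W_mat n a $$ (r,k) * ((-1)^(k+c) * ?H $$ (c,k)))"
    unfolding mult_entry[OF W_carrier ST_carrier r c]
  proof (intro sum.cong refl)
    fix k assume "k \<in> {..<n}"
    hence k: "k < n" by simp
    show "W_mat n a $$ (r, k) * ST n ?H $$ (k, c) = W_mat n a $$ (r, k) * ((- 1) ^ (k + c) * ?H $$ (c, k))"
      using ST_index[OF k c, of ?H] by simp
  qed
  also have "\<dots> = a (r+1) * ((-1)^(r+c) * ?H $$ (c,r)) + (if 0 < r then (-1)^(r-1+c) * ?H $$ (c,r-1) else 0)"
    using W_sum[OF r, of a "\<lambda>k. (-1)^(k+c) * ?H $$ (c,k)"] by simp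
  also have "\<dots> = (if r = c then 1 else 0)"
  proof (cases "r < c")
    case True
    have "?H $$ (c,r) = 0" using Hi[OF c r] True by simp
    moreover have "?H $$ (c,r-1) = 0" using Hi[of c "r-1"] True r c by simp
    ultimately show ?thesis using True by simp
  next
    case False
    show ?thesis
    proof (cases "r = c")
      case True
      have "a (r+1) \<noteq> 0" using nz[of "r+1"] r by simp
      moreover have "?H $$ (c,r) = 1 / a (r+1)" using Hi[OF c r] True by simp
      moreover have "?H $$ (c,r-1) = 0" if "0 < r" using Hi[of c "r-1"] True r c that by simp
      ultimately show ?thesis using True by simp
    next
      case False2: False
      with False have rc: "c < r" by simp
      have P: "(\<Prod>t\<in>{c+1..r+1}. 1 / a t) = (\<Prod>t\<in>{c+1..r}. 1 / a t) * (1 / a (r+1))"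
        using rc by (simp add: prod.nat_ivl_Suc')
      have "a (r+1) \<noteq> 0" using nz[of "r+1"] r by simp
      have H1: "?H $$ (c,r) = (\<Prod>t\<in>{c+1..r}. 1 / a t) * (1 / a (r+1))" using Hi[OF c r] rc P by simp
      have H2: "?H $$ (c,r-1) = (\<Prod>t\<in>{c+1..r}. 1 / a t)" using Hi[of c "r-1"] rc r c by simp
      obtain s where s: "r = Suc s" using rc by (cases r) auto
      have sg: "(-1::complex)^(r+c) = - ((-1)^(r-1+c))" unfolding s by simp
      have "a (r+1) * ((-1)^(r+c) * ?H $$ (c,r)) = (-1)^(r+c) * (\<Prod>t\<in>{c+1..r}. 1 / a t)"
        unfolding H1 using \<open>a (r+1) \<noteq> 0\<close> by (simp add: field_simps)
      thus ?thesis using rc False2 H2 sg by simp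
    qed
  qed
  finally show "(W_mat n a * ST n ?H) $$ (r,c) = 1\<^sub>m n $$ (r,c)" using r c by simp
qed (auto simp: W_mat_def ST_def)

lemma foldr_carrier:
  assumes "\<And>i. M i \<in> carrier_mat n n"
  shows "foldr (\<lambda>i A. M i * A) xs (1\<^sub>m n) \<in> carrier_mat n n"
  using assms by (induction xs) (auto intro: mult_carrier_mat[of _ n n _ n])

lemma tele:
  assumes "\<And>a k. a \<in> set xs \<Longrightarrow> 1 \<le> k \<Longrightarrow> k \<le> n \<Longrightarrow> x a k \<noteq> 0"
  shows "foldr (\<lambda>i A. W_mat n (x i) * A) xs (1\<^sub>m n) * ST n (foldr (\<lambda>i A. H_mat n (\<lambda>k. 1 / x i k) * A) xs (1\<^sub>m n)) = 1\<^sub>m n"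
  using assms
proof (induction xs)
  case Nil
  show ?case by (simp add: ST_one)
next
  case (Cons a xs)
  define F where "F = foldr (\<lambda>i A. W_mat n (x i) * A) xs (1\<^sub>m n)"
  define G where "G = foldr (\<lambda>i A. H_mat n (\<lambda>k. 1 / x i k) * A) xs (1\<^sub>m n)"
  have F: "F \<in> carrier_mat n n" unfolding F_def by (rule foldr_carrier) simp
  have G: "G \<in> carrier_mat n n" unfolding G_def by (rule foldr_carrier) simp
  have IH: "F * ST n G = 1\<^sub>m n" unfolding F_def G_def using Cons by simp
  have WH: "W_mat n (x a) * ST n (H_mat n (\<lambda>k. 1 / x a k)) = 1\<^sub>m n"
    by (rule WH_inv) (use Cons.prems in simp)
  have "(W_mat n (x a) * F) * ST n (H_mat n (\<lambda>k. 1 / x a k) * G)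
      = (W_mat n (x a) * F) * (ST n G * ST n (H_mat n (\<lambda>k. 1 / x a k)))"
    by (simp add: ST_mult G)
  also have "\<dots> = W_mat n (x a) * ((F * ST n G) * ST n (H_mat n (\<lambda>k. 1 / x a k)))"
  proof -
    let ?W = "W_mat n (x a)" and ?S = "ST n (H_mat n (\<lambda>k. 1 / x a k))"
    have "(?W * F) * (ST n G * ?S) = ?W * (F * (ST n G * ?S))"
      by (rule assoc_mult_mat[OF W_carrier F]) (rule mult_carrier_mat[OF ST_carrier ST_carrier])
    also have "F * (ST n G * ?S) = (F * ST n G) * ?S"
      by (rule assoc_mult_mat[OF F ST_carrier ST_carrier, symmetric])
    finally show ?thesis .
  qed
  also have "\<dots> = 1\<^sub>m n" unfolding IH using WH left_mult_one_mat[OF ST_carrier] by simp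
  finally show ?case unfolding F_def G_def by simp
qed

lemma lower_foldr:
  assumes "r < c" "c < n"
  shows "foldr (\<lambda>i A. W_mat n (x i) * A) xs (1\<^sub>m n) $$ (r,c) = 0"
  using assms
proof (induction xs arbitrary: r c)
  case Nil thus ?case by simp
next
  case (Cons a xs)
  define F where "F = foldr (\<lambda>i A. W_mat n (x i) * A) xs (1\<^sub>m n)"
  have F: "F \<in> carrier_mat n n" unfolding F_def by (rule foldr_carrier) simp
  have "(W_mat n (x a) * F) $$ (r,c) = (\<Sum>k<n. W_mat n (x a) $$ (r,k) * F $$ (k,c))"
    using Cons.prems by (intro mult_entry[OF W_carrier F]) auto
  also have "\<dots> = 0"
  proof (rule sum.neutral, rule ballI)
    fix k assume k: "k \<in> {..<n}"
    show "W_mat n (x a) $$ (r,k) * F $$ (k,c) = 0"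
    proof (cases "r < k")
      case True thus ?thesis using k Cons.prems by (simp add: W_mat_def)
    next
      case False
      hence "k < c" using Cons.prems by simp
      hence "F $$ (k,c) = 0" unfolding F_def using Cons.IH Cons.prems by simp
      thus ?thesis by simp
    qed
  qed
  finally show ?case unfolding F_def by simp
qed

lemma lead_inv:
  fixes P R :: "complex mat"
  assumes P: "P \<in> carrier_mat n n" and R: "R \<in> carrier_mat n n" and PR: "P * R = 1\<^sub>m n"
    and low: "\<And>r c. r < c \<Longrightarrow> c < n \<Longrightarrow> P $$ (r,c) = 0" and j: "j \<le> n"
  shows "mat j j (\<lambda>(r,c). P $$ (r,c)) * mat j j (\<lambda>(r,c). R $$ (r,c)) = 1\<^sub>m j"
proof (rule eq_matI)
  fix r c assume "r < dim_row (1\<^sub>m j :: complex mat)" "c < dim_col (1\<^sub>m j :: complex mat)"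
  hence r: "r < j" and c: "c < j" by auto
  have "(mat j j (\<lambda>(r,c). P $$ (r,c)) * mat j j (\<lambda>(r,c). R $$ (r,c))) $$ (r,c) = (\<Sum>k<j. P $$ (r,k) * R $$ (k,c))"
    using r c by (subst mult_entry[of _ j j _ j]) auto
  also have "\<dots> = (\<Sum>k<n. P $$ (r,k) * R $$ (k,c))"
  proof (rule sum.mono_neutral_left)
    show "\<forall>k\<in>{..<n} - {..<j}. P $$ (r,k) * R $$ (k,c) = 0" using low r j by auto
  qed (use j in auto)
  also have "\<dots> = (P * R) $$ (r,c)" using mult_entry[OF P R, of r c] r c j by simp
  also have "\<dots> = 1\<^sub>m j $$ (r,c)" unfolding PR using r c j by simp
  finally show "(mat j j (\<lambda>(r,c). P $$ (r,c)) * mat j j (\<lambda>(r,c). R $$ (r,c))) $$ (r,c) = 1\<^sub>m j $$ (r,c)" .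
qed auto

definition Dg :: "nat \<Rightarrow> complex mat" where
  "Dg p = mat p p (\<lambda>(r,c). if r = c then (-1)^r else 0)"

lemma Dg_carrier[simp]: "Dg p \<in> carrier_mat p p" unfolding Dg_def by simp

lemma Dg_left:
  assumes M: "M \<in> carrier_mat p p"
  shows "Dg p * M = mat p p (\<lambda>(r,c). (-1)^r * M $$ (r,c))"
proof (rule eq_matI)
  fix r c assume "r < dim_row (mat p p (\<lambda>(r,c). (-1)^r * M $$ (r,c)))" "c < dim_col (mat p p (\<lambda>(r,c). (-1)^r * M $$ (r,c)))"
  hence r: "r < p" and c: "c < p" by auto
  have "(Dg p * M) $$ (r,c) = (\<Sum>k<p. Dg p $$ (r,k) * M $$ (k,c))" by (rule mult_entry[OF Dg_carrier M r c])
  also have "\<dots> = (\<Sum>k<p. if k = r then (-1)^r * M $$ (r,c) else 0)"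
    by (rule sum.cong) (auto simp: Dg_def r)
  also have "\<dots> = (-1)^r * M $$ (r,c)" using r by simp
  finally show "(Dg p * M) $$ (r,c) = mat p p (\<lambda>(r,c). (-1)^r * M $$ (r,c)) $$ (r,c)" using r c by simp
qed (use M in \<open>auto simp: Dg_def\<close>)

lemma Dg_right:
  assumes M: "M \<in> carrier_mat p p"
  shows "M * Dg p = mat p p (\<lambda>(r,c). M $$ (r,c) * (-1)^c)"
proof (rule eq_matI)
  fix r c assume "r < dim_row (mat p p (\<lambda>(r,c). M $$ (r,c) * (-1)^c))" "c < dim_col (mat p p (\<lambda>(r,c). M $$ (r,c) * (-1)^c))"
  hence r: "r < p" and c: "c < p" by auto
  have "(M * Dg p) $$ (r,c) = (\<Sum>k<p. M $$ (r,k) * Dg p $$ (k,c))" by (rule mult_entry[OF M Dg_carrier r c])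
  also have "\<dots> = (\<Sum>k<p. if k = c then M $$ (r,c) * (-1)^c else 0)"
    by (rule sum.cong) (auto simp: Dg_def c)
  also have "\<dots> = M $$ (r,c) * (-1)^c" using c by simp
  finally show "(M * Dg p) $$ (r,c) = mat p p (\<lambda>(r,c). M $$ (r,c) * (-1)^c) $$ (r,c)" using r c by simp
qed (use M in \<open>auto simp: Dg_def\<close>)

lemma neg1_sq: "((-1::complex)^k) * ((-1)^k) = 1" by (induction k) auto

lemma det_Dg_sq: "det (Dg p) * det (Dg p) = 1"
proof -
  have "Dg p * Dg p = mat p p (\<lambda>(r,c). (-1)^r * Dg p $$ (r,c))" by (rule Dg_left) simp
  also have "\<dots> = 1\<^sub>m p" by (rule eq_matI) (auto simp: Dg_def neg1_sq)
  finally have "det (Dg p * Dg p) = 1" by simp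
  thus ?thesis using det_mult[OF Dg_carrier Dg_carrier] by simp
qed

lemma det_sign_transpose:
  fixes g :: "nat \<Rightarrow> nat \<Rightarrow> complex"
  shows "det (mat p p (\<lambda>(r,c). (-1)^(q+r+c) * g c r)) = (-1)^(q*p) * det (mat p p (\<lambda>(r,c). g r c))"
proof -
  let ?G = "mat p p (\<lambda>(r,c). g r c) :: complex mat"
  have T: "transpose_mat ?G \<in> carrier_mat p p" by simp
  have "Dg p * transpose_mat ?G * Dg p = mat p p (\<lambda>(r,c). ((-1)^r * g c r) * (-1)^c)"
    unfolding Dg_left[OF T] by (subst Dg_right) auto
  hence e: "mat p p (\<lambda>(r,c). (-1)^(q+r+c) * g c r) = (-1)^q \<cdot>\<^sub>m (Dg p * transpose_mat ?G * Dg p)"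
    by (auto intro!: eq_matI simp: power_add)
  have "det (Dg p * transpose_mat ?G * Dg p) = det (Dg p) * det (transpose_mat ?G) * det (Dg p)"
    using det_mult[OF mult_carrier_mat[OF Dg_carrier T] Dg_carrier] det_mult[OF Dg_carrier T] by simp
  also have "\<dots> = det ?G" using det_Dg_sq det_transpose[of ?G p] by (simp add: algebra_simps)
  finally show ?thesis unfolding e by (simp add: power_mult Dg_def)
qed

lemma key:
  fixes P Q :: "complex mat"
  assumes P: "P \<in> carrier_mat n n" and Q: "Q \<in> carrier_mat n n" and PR: "P * ST n Q = 1\<^sub>m n"
    and low: "\<And>r c. r < c \<Longrightarrow> c < n \<Longrightarrow> P $$ (r,c) = 0" and pq: "p + q = j" and j: "j \<le> n"
  shows "det (mat q q (\<lambda>(r,c). P $$ (p+r,c))) = det (mat j j (\<lambda>(r,c). P $$ (r,c))) * det (mat p p (\<lambda>(r,c). Q $$ (r, q+c)))"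
proof -
  let ?A = "mat j j (\<lambda>(r,c). P $$ (r,c))" and ?B = "mat j j (\<lambda>(r,c). ST n Q $$ (r,c))"
  have AB: "?A * ?B = 1\<^sub>m j" by (rule lead_inv[OF P ST_carrier PR low j])
  have Ac: "?A \<in> carrier_mat (p+q) (p+q)" and Bc: "?B \<in> carrier_mat (p+q) (p+q)" using pq by auto
  have J: "det (mat q q (\<lambda>(r,c). ?A $$ (p+r,c))) = (-1)^(p*q) * det ?A * det (mat p p (\<lambda>(r,c). ?B $$ (q+r,c)))"
    by (rule jacobi[OF Ac Bc]) (use AB pq in simp)
  have e1: "mat q q (\<lambda>(r,c). ?A $$ (p+r,c)) = mat q q (\<lambda>(r,c). P $$ (p+r,c))"
    by (rule eq_matI) (use pq in auto)
  have e2: "mat p p (\<lambda>(r,c). ?B $$ (q+r,c)) = mat p p (\<lambda>(r,c). (-1)^(q+r+c) * Q $$ (c, q+r))"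
    by (rule eq_matI) (use pq j in \<open>auto simp: ST_index\<close>)
  have e3: "det (mat p p (\<lambda>(r,c). (-1)^(q+r+c) * Q $$ (c, q+r))) = (-1)^(q*p) * det (mat p p (\<lambda>(r,c). Q $$ (r, q+c)))"
    using det_sign_transpose[of p q "\<lambda>r c. Q $$ (r, q+c)"] by simp
  have "(-1::complex)^(p*q) * (-1)^(q*p) = 1" using neg1_sq[of "p*q"] by (simp add: mult.commute)
  thus ?thesis using J unfolding e1 e2 e3 by (simp add: algebra_simps)
qed

theorem lemma4p12:
  fixes n m i j :: nat and x :: "nat \<Rightarrow> nat \<Rightarrow> complex"
  assumes nz: "\<And>a k. 1 \<le> a \<Longrightarrow> a \<le> m \<Longrightarrow> 1 \<le> k \<Longrightarrow> k \<le> n \<Longrightarrow> x a k \<noteq> 0"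
    and i: "1 \<le> i" "i \<le> m" and j: "i \<le> j" "j \<le> n"
    and denH: "Delta (prodH n m x) {1..i} {j-i+1..j} \<noteq> 0"
    and denW: "Delta (prodW n m x) {i+1..j} {1..j-i} \<noteq> 0"
  shows "Delta (prodH n m x) {1..i-1} {j-i+2..j} / Delta (prodH n m x) {1..i} {j-i+1..j}
       = Delta (prodW n m x) {i..j} {1..j-i+1} / Delta (prodW n m x) {i+1..j} {1..j-i}"
proof -
  let ?P = "prodW n m x" and ?Q = "prodH n m x"
  have P: "?P \<in> carrier_mat n n" unfolding prodW_def by (rule foldr_carrier) simp
  have Q: "?Q \<in> carrier_mat n n" unfolding prodH_def by (rule foldr_carrier) simp
  have PR: "?P * ST n ?Q = 1\<^sub>m n" unfolding prodW_def prodH_def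
    by (rule tele) (use nz in auto)
  have low: "?P $$ (r,c) = 0" if "r < c" "c < n" for r c
    unfolding prodW_def using lower_foldr that by blast
  let ?A = "mat j j (\<lambda>(r,c). ?P $$ (r,c))" and ?B = "mat j j (\<lambda>(r,c). ST n ?Q $$ (r,c))"
  have AB: "?A * ?B = 1\<^sub>m j" by (rule lead_inv[OF P ST_carrier PR low j(2)])
  have "det ?A * det ?B = 1" using det_mult[of ?A j ?B] AB by simp
  hence dA: "det ?A \<noteq> 0" by auto
  have Pden: "Delta ?P {i+1..j} {1..j-i} = det (mat (j-i) (j-i) (\<lambda>(r,s). ?P $$ (i+r, s)))"
    using Delta_interval[OF P, of "i+1" 1 "j-i" j "j-i"] j by simp
  have Pnum: "Delta ?P {i..j} {1..j-i+1} = det (mat (j-i+1) (j-i+1) (\<lambda>(r,s). ?P $$ ((i-1)+r, s)))"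
    using Delta_interval[OF P, of i 1 "j-i+1" j "j-i+1"] i j by simp
  have Qden: "Delta ?Q {1..i} {j-i+1..j} = det (mat i i (\<lambda>(r,s). ?Q $$ (r, (j-i)+s)))"
    using Delta_interval[OF Q, of 1 "j-i+1" i i j] i j by simp
  have Qnum: "Delta ?Q {1..i-1} {j-i+2..j} = det (mat (i-1) (i-1) (\<lambda>(r,s). ?Q $$ (r, (j-i+1)+s)))"
    using Delta_interval[OF Q, of 1 "j-i+2" "i-1" "i-1" j] i j by simp
  have K1: "Delta ?P {i+1..j} {1..j-i} = det ?A * Delta ?Q {1..i} {j-i+1..j}"
    unfolding Pden Qden by (rule key[OF P Q PR low]) (use i j in auto)
  have K2: "Delta ?P {i..j} {1..j-i+1} = det ?A * Delta ?Q {1..i-1} {j-i+2..j}"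
    unfolding Pnum Qnum by (rule key[OF P Q PR low]) (use i j in auto)
  show ?thesis unfolding K1 K2 using dA by simp
qed

end
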